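(* Let $L>0$ and $M>0$ be constants, and let $N$ be a real constant with $$|N|\le \frac{8M}{L^3}.$$ Then for every $p\in L^1[0,L]$ the nonlocal boundary value problem $$y^{(4)}(x)-My''(x)+N\int_0^L y(t)\,dt=p(x)\ \ \text{for a.e. } x\in(0,L),\qquad y(0)=y(L)=y''(0)=y''(L)=0,$$ has a unique solution $y\in W^{4,1}[0,L]$, and it is given by $$y(x)=\int_0^L G(x,s)p(s)\,ds-\frac{N\int_0^L G(x,s)\,ds}{1+N\int_0^L\!\int_0^L G(x,s)\,ds\,dx}\int_0^L\!\int_0^L G(x,s)p(s)\,ds\,dx,\qquad x\in[0,L].$$
   Context: $G$ is the Green function of $y''''-My''=0$ with the boundary conditions $y(0)=y(L)=y''(0)=y''(L)=0$, explicitly $$G(x,s)=\begin{cases}\dfrac{x(L-s)}{ML}-\dfrac{\sinh(\sqrt M x)\sinh(\sqrt M(L-s))}{M\sqrt M\sinh(\sqrt M L)}, & 0\le x\le s\le L,\\[2mm] \dfrac{s(L-x)}{ML}-\dfrac{\sinh(\sqrt M s)\sinh(\sqrt M(L-x))}{M\sqrt M\sinh(\sqrt M L)}, & 0\le s\le x\le L.\end{cases}$$ *)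

theory Defs
  imports "HOL-Analysis.Analysis"
begin

text \<open>Green function of y'''' - M y'' = 0 with y(0)=y(L)=y''(0)=y''(L)=0.\<close>
definition green :: "real \<Rightarrow> real \<Rightarrow> real \<Rightarrow> real \<Rightarrow> real" where
  "green M L x s =
     (if x \<le> s then
        x * (L - s) / (M * L)
        - sinh (sqrt M * x) * sinh (sqrt M * (L - s)) / (M * sqrt M * sinh (sqrt M * L))
      else
        s * (L - x) / (M * L)
        - sinh (sqrt M * s) * sinh (sqrt M * (L - x)) / (M * sqrt M * sinh (sqrt M * L)))"

text \<open>Membership in W^{4,1}[0,L]:
  y, y', y'' are differentiable on [0,L] (one-sided at the ends) with derivatives y1, y2, y3,
  and y3 is absolutely continuous, i.e. the indefinite integral of an L^1 function g
  (which is then y'''' a.e.).\<close>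
definition is_solution :: "real \<Rightarrow> real \<Rightarrow> real \<Rightarrow> (real \<Rightarrow> real) \<Rightarrow> (real \<Rightarrow> real) \<Rightarrow> bool" where
  "is_solution M N L p y \<longleftrightarrow>
     (\<exists>y1 y2 y3 g.
        g absolutely_integrable_on {0..L} \<and>
        (\<forall>x\<in>{0..L}.
            (y has_real_derivative y1 x) (at x within {0..L}) \<and>
            (y1 has_real_derivative y2 x) (at x within {0..L}) \<and>
            (y2 has_real_derivative y3 x) (at x within {0..L}) \<and>
            y3 x = y3 0 + integral {0..x} g) \<and>
        (\<exists>S. negligible S \<and>
            (\<forall>x\<in>{0<..<L} - S. g x - M * y2 x + N * integral {0..L} y = p x)) \<and>
        y 0 = 0 \<and> y L = 0 \<and> y2 0 = 0 \<and> y2 L = 0)"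

end

theory Submission
  imports Defs
begin

lemma deriv_prod_cont:
  fixes a A :: "real \<Rightarrow> real"
  assumes "(a has_real_derivative a') (at x0 within S)" "continuous (at x0 within S) A"
  shows "((\<lambda>x. (a x - a x0) * A x) has_real_derivative a' * A x0) (at x0 within S)"
proof -
  have "((\<lambda>y. (a y - a x0)/(y - x0) * A y) \<longlongrightarrow> a' * A x0) (at x0 within S)"
    using tendsto_mult[OF assms(1)[unfolded has_field_derivative_iff] assms(2)[unfolded continuous_within]] .
  moreover have "(\<lambda>y. ((a y - a x0) * A y - (a x0 - a x0) * A x0) / (y - x0)) = (\<lambda>y. (a y - a x0)/(y - x0) * A y)"
    by (auto simp: fun_eq_iff)
  ultimately show ?thesis unfolding has_field_derivative_iff by simp
qed

lemma deriv_zero_bound: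
  fixes R I :: "real \<Rightarrow> real"
  assumes "continuous (at x0 within S) I" "\<And>x. x \<in> S \<Longrightarrow> \<bar>R x - R x0\<bar> \<le> C * \<bar>x - x0\<bar> * \<bar>I x - I x0\<bar>"
  shows "(R has_real_derivative 0) (at x0 within S)"
  unfolding has_field_derivative_iff
proof (rule Lim_null_comparison)
  have "eventually (\<lambda>y. y \<in> S \<and> y \<noteq> x0) (at x0 within S)"
    by (simp add: eventually_at_filter)
  then show "\<forall>\<^sub>F y in at x0 within S. norm ((R y - R x0) / (y - x0)) \<le> C * \<bar>I y - I x0\<bar>"
  proof (rule eventually_mono)
    fix y assume y: "y \<in> S \<and> y \<noteq> x0"
    then have p: "\<bar>y - x0\<bar> > 0" by auto
    have "\<bar>R y - R x0\<bar> \<le> C * \<bar>I y - I x0\<bar> * \<bar>y - x0\<bar>" using assms(2)[of y] y by (simp add: mult_ac)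
    then show "norm ((R y - R x0) / (y - x0)) \<le> C * \<bar>I y - I x0\<bar>"
      using p by (simp add: abs_divide divide_le_eq)
  qed
  have "((\<lambda>y. C * \<bar>I y - I x0\<bar>) \<longlongrightarrow> C * \<bar>I x0 - I x0\<bar>) (at x0 within S)"
    using assms(1) unfolding continuous_within by (intro tendsto_intros)
  then show "((\<lambda>y. C * \<bar>I y - I x0\<bar>) \<longlongrightarrow> 0) (at x0 within S)" by simp
qed

lemma lip_from_deriv:
  fixes f :: "real \<Rightarrow> real"
  assumes d: "\<And>x. x \<in> {a..b} \<Longrightarrow> (f has_real_derivative f' x) (at x within {a..b})"
    and bnd: "\<And>x. x \<in> {a..b} \<Longrightarrow> \<bar>f' x\<bar> \<le> B"
    and s: "s \<in> {a..b}" and t: "t \<in> {a..b}"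
  shows "\<bar>f s - f t\<bar> \<le> B * \<bar>s - t\<bar>"
proof -
  have main: "\<bar>f v - f u\<bar> \<le> B * (v - u)" if "u \<in> {a..b}" "v \<in> {a..b}" "u < v" for u v
  proof -
    have "\<exists>x\<in>{u<..<v}. f v - f u = (\<lambda>h. f' x * h) (v - u)"
    proof (rule mvt_simple[OF \<open>u < v\<close>])
      fix x assume "u \<le> x" "x \<le> v"
      then have "x \<in> {a..b}" "{u..v} \<subseteq> {a..b}" using that by auto
      then show "(f has_derivative (\<lambda>h. f' x * h)) (at x within {u..v})"
        using d[of x] has_field_derivative_subset unfolding has_field_derivative_def by blast
    qed
    then obtain x where x: "x \<in> {u<..<v}" "f v - f u = f' x * (v - u)" by auto
    then have "x \<in> {a..b}" using that by auto
    then have "\<bar>f' x\<bar> * (v - u) \<le> B * (v - u)" using bnd[of x] \<open>u < v\<close> by (intro mult_right_mono) auto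
    then show ?thesis using x \<open>u < v\<close> by (simp add: abs_mult)
  qed
  consider "s < t" | "s = t" | "t < s" by linarith
  then show ?thesis
  proof cases
    case 1 then show ?thesis using main[OF s t] by (simp add: abs_minus_commute)
  next
    case 2 then show ?thesis by simp
  next
    case 3 then show ?thesis using main[OF t s] by simp
  qed
qed

lemma absint_cont_mult:
  fixes q al :: "real \<Rightarrow> real"
  assumes "continuous_on {a..b} al" "q absolutely_integrable_on {a..b}"
  shows "(\<lambda>s. al s * q s) absolutely_integrable_on {a..b}"
  by (rule absolutely_integrable_bounded_measurable_product_real)
     (auto intro: assms continuous_imp_measurable_on_sets_lebesgue compact_imp_bounded compact_continuous_image)

lemma absint_sub:
  fixes q :: "real \<Rightarrow> real"
  assumes "q absolutely_integrable_on {a..b}" "a \<le> u" "v \<le> b"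
  shows "q integrable_on {u..v}" "(\<lambda>s. \<bar>q s\<bar>) integrable_on {u..v}"
proof -
  have "q integrable_on {a..b}" "(\<lambda>s. norm (q s)) integrable_on {a..b}"
    using assms(1) absolutely_integrable_on_def by blast+
  moreover have sub: "{u..v} \<subseteq> {a..b}" using assms by auto
  ultimately show "q integrable_on {u..v}" "(\<lambda>s. \<bar>q s\<bar>) integrable_on {u..v}"
    using integrable_on_subinterval[OF _ sub] by (auto simp: real_norm_def)
qed


lemma kink_deriv:
  fixes q a1 a2 b1 b2 alA alB beA beB :: "real \<Rightarrow> real"
  assumes q: "q absolutely_integrable_on {0..L}"
    and c1: "continuous_on {0..L} alA" and c2: "continuous_on {0..L} alB"
    and c3: "continuous_on {0..L} beA" and c4: "continuous_on {0..L} beB"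
    and l1: "\<And>s t. s \<in> {0..L} \<Longrightarrow> t \<in> {0..L} \<Longrightarrow> \<bar>alA s - alA t\<bar> \<le> C * \<bar>s - t\<bar>"
    and l2: "\<And>s t. s \<in> {0..L} \<Longrightarrow> t \<in> {0..L} \<Longrightarrow> \<bar>alB s - alB t\<bar> \<le> C * \<bar>s - t\<bar>"
    and l3: "\<And>s t. s \<in> {0..L} \<Longrightarrow> t \<in> {0..L} \<Longrightarrow> \<bar>beA s - beA t\<bar> \<le> C * \<bar>s - t\<bar>"
    and l4: "\<And>s t. s \<in> {0..L} \<Longrightarrow> t \<in> {0..L} \<Longrightarrow> \<bar>beB s - beB t\<bar> \<le> C * \<bar>s - t\<bar>"
    and d1: "(a1 has_real_derivative d1) (at x0 within {0..L})"
    and d2: "(a2 has_real_derivative d2) (at x0 within {0..L})"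
    and e1: "(b1 has_real_derivative e1) (at x0 within {0..L})"
    and e2: "(b2 has_real_derivative e2) (at x0 within {0..L})"
    and diag: "a1 x0 * alA x0 + a2 x0 * alB x0 = b1 x0 * beA x0 + b2 x0 * beB x0"
    and x0: "x0 \<in> {0..L}" and C0: "C \<ge> 0"
  shows "((\<lambda>x. a1 x * integral {0..x} (\<lambda>s. alA s * q s) + a2 x * integral {0..x} (\<lambda>s. alB s * q s)
             + b1 x * integral {x..L} (\<lambda>s. beA s * q s) + b2 x * integral {x..L} (\<lambda>s. beB s * q s))
         has_real_derivative
           (d1 * integral {0..x0} (\<lambda>s. alA s * q s) + d2 * integral {0..x0} (\<lambda>s. alB s * q s)
             + e1 * integral {x0..L} (\<lambda>s. beA s * q s) + e2 * integral {x0..L} (\<lambda>s. beB s * q s)))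
         (at x0 within {0..L})"
proof -
  define f1 where "f1 = (\<lambda>s. alA s * q s)"
  define f2 where "f2 = (\<lambda>s. alB s * q s)"
  define g1 where "g1 = (\<lambda>s. beA s * q s)"
  define g2 where "g2 = (\<lambda>s. beB s * q s)"
  define A1 where "A1 = (\<lambda>x. integral {0..x} f1)"
  define A2 where "A2 = (\<lambda>x. integral {0..x} f2)"
  define B1 where "B1 = (\<lambda>x. integral {x..L} g1)"
  define B2 where "B2 = (\<lambda>x. integral {x..L} g2)"
  define I where "I = (\<lambda>x. integral {0..x} (\<lambda>s. \<bar>q s\<bar>))"
  define phi where "phi = (\<lambda>s. a1 x0 * alA s + a2 x0 * alB s - b1 x0 * beA s - b2 x0 * beB s)"
  define C' where "C' = (\<bar>a1 x0\<bar> + \<bar>a2 x0\<bar> + \<bar>b1 x0\<bar> + \<bar>b2 x0\<bar>) * C"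
  define R where "R = (\<lambda>x. a1 x0 * A1 x + a2 x0 * A2 x + b1 x0 * B1 x + b2 x0 * B2 x)"
  have af1: "f1 absolutely_integrable_on {0..L}" unfolding f1_def by (rule absint_cont_mult[OF c1 q])
  have af2: "f2 absolutely_integrable_on {0..L}" unfolding f2_def by (rule absint_cont_mult[OF c2 q])
  have ag1: "g1 absolutely_integrable_on {0..L}" unfolding g1_def by (rule absint_cont_mult[OF c3 q])
  have ag2: "g2 absolutely_integrable_on {0..L}" unfolding g2_def by (rule absint_cont_mult[OF c4 q])
  have cphi: "continuous_on {0..L} phi" unfolding phi_def
    by (intro continuous_intros c1 c2 c3 c4)
  have aphi: "(\<lambda>s. phi s * q s) absolutely_integrable_on {0..L}" by (rule absint_cont_mult[OF cphi q])
  note sub = absint_sub(1)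
  have ints: "f1 integrable_on {u..v}" "f2 integrable_on {u..v}" "g1 integrable_on {u..v}" "g2 integrable_on {u..v}"
    "(\<lambda>s. phi s * q s) integrable_on {u..v}" "(\<lambda>s. \<bar>q s\<bar>) integrable_on {u..v}"
    if "0 \<le> u" "v \<le> L" for u v
    using sub[OF af1 that] sub[OF af2 that] sub[OF ag1 that] sub[OF ag2 that] sub[OF aphi that]
      absint_sub(2)[OF q that] by auto
  have phi0: "phi x0 = 0" using diag unfolding phi_def by simp
  have phib: "\<bar>phi s\<bar> \<le> C' * \<bar>s - x0\<bar>" if s: "s \<in> {0..L}" for s
  proof -
    have "phi s = phi s - phi x0" using phi0 by simp
    also have "\<dots> = a1 x0 * (alA s - alA x0) + a2 x0 * (alB s - alB x0) - b1 x0 * (beA s - beA x0) - b2 x0 * (beB s - beB x0)"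
      unfolding phi_def by (simp add: algebra_simps)
    finally have "\<bar>phi s\<bar> \<le> \<bar>a1 x0\<bar> * \<bar>alA s - alA x0\<bar> + \<bar>a2 x0\<bar> * \<bar>alB s - alB x0\<bar> + \<bar>b1 x0\<bar> * \<bar>beA s - beA x0\<bar> + \<bar>b2 x0\<bar> * \<bar>beB s - beB x0\<bar>"
      by (simp add: abs_mult[symmetric])
    also have "\<dots> \<le> \<bar>a1 x0\<bar> * (C * \<bar>s - x0\<bar>) + \<bar>a2 x0\<bar> * (C * \<bar>s - x0\<bar>) + \<bar>b1 x0\<bar> * (C * \<bar>s - x0\<bar>) + \<bar>b2 x0\<bar> * (C * \<bar>s - x0\<bar>)"
      by (intro add_mono mult_left_mono l1 l2 l3 l4 s x0) auto
    also have "\<dots> = C' * \<bar>s - x0\<bar>" unfolding C'_def by (simp add: algebra_simps)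
    finally show ?thesis .
  qed
  have Rdiff: "R v - R u = integral {u..v} (\<lambda>s. phi s * q s)" if uv: "0 \<le> u" "u \<le> v" "v \<le> L" for u v
  proof -
    have "A1 v = A1 u + integral {u..v} f1" unfolding A1_def
      using Henstock_Kurzweil_Integration.integral_combine[where f=f1 and a=0 and c=u and b=v] ints(1)[of 0 v] uv by simp
    moreover have "A2 v = A2 u + integral {u..v} f2" unfolding A2_def
      using Henstock_Kurzweil_Integration.integral_combine[where f=f2 and a=0 and c=u and b=v] ints(2)[of 0 v] uv by simp
    moreover have "B1 u = integral {u..v} g1 + B1 v" unfolding B1_def
      using Henstock_Kurzweil_Integration.integral_combine[where f=g1 and a=u and c=v and b=L] ints(3)[of u L] uv by simp
    moreover have "B2 u = integral {u..v} g2 + B2 v" unfolding B2_def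
      using Henstock_Kurzweil_Integration.integral_combine[where f=g2 and a=u and c=v and b=L] ints(4)[of u L] uv by simp
    moreover have "integral {u..v} (\<lambda>s. phi s * q s) = a1 x0 * integral {u..v} f1 + a2 x0 * integral {u..v} f2 - b1 x0 * integral {u..v} g1 - b2 x0 * integral {u..v} g2"
    proof -
      have "(\<lambda>s. phi s * q s) = (\<lambda>s. a1 x0 * f1 s + a2 x0 * f2 s - b1 x0 * g1 s - b2 x0 * g2 s)"
        unfolding phi_def f1_def f2_def g1_def g2_def by (auto simp: fun_eq_iff algebra_simps)
      moreover have "((\<lambda>s. a1 x0 * f1 s + a2 x0 * f2 s - b1 x0 * g1 s - b2 x0 * g2 s) has_integral
          (a1 x0 * integral {u..v} f1 + a2 x0 * integral {u..v} f2 - b1 x0 * integral {u..v} g1 - b2 x0 * integral {u..v} g2)) {u..v}"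
        using ints[OF uv(1) uv(3)]
        by (intro has_integral_diff has_integral_add has_integral_mult_right integrable_integral)
      ultimately show ?thesis by (simp add: integral_unique)
    qed
    ultimately show ?thesis unfolding R_def by (simp add: algebra_simps)
  qed
  have gen: "\<bar>integral {u..v} (\<lambda>s. phi s * q s)\<bar> \<le> C' * (v - u) * (I v - I u)"
    if uv: "0 \<le> u" "u \<le> v" "v \<le> L" "x0 = u \<or> x0 = v" for u v
  proof -
    have "norm (integral {u..v} (\<lambda>s. phi s * q s)) \<le> integral {u..v} (\<lambda>s. C' * (v - u) * \<bar>q s\<bar>)"
    proof (rule integral_norm_bound_integral)
      show "(\<lambda>s. phi s * q s) integrable_on {u..v}" using ints uv by auto
      show "(\<lambda>s. C' * (v - u) * \<bar>q s\<bar>) integrable_on {u..v}"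
        using ints(6)[OF uv(1) uv(3)] by (intro integrable_on_mult_right)
      fix s assume s: "s \<in> {u..v}"
      then have "s \<in> {0..L}" "\<bar>s - x0\<bar> \<le> v - u" using uv by auto
      moreover have "C' \<ge> 0" unfolding C'_def using C0 by simp
      ultimately have "C' * \<bar>s - x0\<bar> \<le> C' * (v - u)" by (intro mult_left_mono)
      then have "\<bar>phi s\<bar> \<le> C' * (v - u)"
        using phib[OF \<open>s \<in> {0..L}\<close>] by linarith
      then have "\<bar>phi s\<bar> * \<bar>q s\<bar> \<le> C' * (v - u) * \<bar>q s\<bar>"
        by (intro mult_right_mono) auto
      then show "norm (phi s * q s) \<le> C' * (v - u) * \<bar>q s\<bar>"
        by (simp add: abs_mult)
    qed
    also have "\<dots> = C' * (v - u) * integral {u..v} (\<lambda>s. \<bar>q s\<bar>)" by simp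
    also have "integral {u..v} (\<lambda>s. \<bar>q s\<bar>) = I v - I u"
      unfolding I_def using Henstock_Kurzweil_Integration.integral_combine[where f="\<lambda>s. \<bar>q s\<bar>" and a=0 and c=u and b=v] ints(6)[of 0 v] uv by simp
    finally show ?thesis by simp
  qed
  have Rbound: "\<bar>R x - R x0\<bar> \<le> C' * \<bar>x - x0\<bar> * \<bar>I x - I x0\<bar>" if x: "x \<in> {0..L}" for x
  proof (cases "x0 \<le> x")
    case True
    then have "I x0 \<le> I x" unfolding I_def
      using Henstock_Kurzweil_Integration.integral_combine[where f="\<lambda>s. \<bar>q s\<bar>" and a=0 and c=x0 and b=x] ints(6)[of 0 x] x x0
        integral_nonneg[OF ints(6)[of x0 x]] by auto
    then show ?thesis using Rdiff[of x0 x] gen[of x0 x] True x x0 by simp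
  next
    case False
    then have "I x \<le> I x0" unfolding I_def
      using Henstock_Kurzweil_Integration.integral_combine[where f="\<lambda>s. \<bar>q s\<bar>" and a=0 and c=x and b=x0] ints(6)[of 0 x0] x x0
        integral_nonneg[OF ints(6)[of x x0]] by auto
    then show ?thesis using Rdiff[of x x0] gen[of x x0] False x x0 by (simp add: abs_minus_commute)
  qed
  have contI: "continuous (at x0 within {0..L}) I"
    using indefinite_integral_continuous_1[OF ints(6)[of 0 L]] x0 unfolding I_def
    by (simp add: continuous_on_eq_continuous_within)
  have RD: "(R has_real_derivative 0) (at x0 within {0..L})"
    by (rule deriv_zero_bound[OF contI Rbound])
  have cA1: "continuous (at x0 within {0..L}) A1"
    using indefinite_integral_continuous_1[OF ints(1)[of 0 L]] x0 unfolding A1_def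
    by (simp add: continuous_on_eq_continuous_within)
  have cA2: "continuous (at x0 within {0..L}) A2"
    using indefinite_integral_continuous_1[OF ints(2)[of 0 L]] x0 unfolding A2_def
    by (simp add: continuous_on_eq_continuous_within)
  have cB1: "continuous (at x0 within {0..L}) B1"
    using indefinite_integral_continuous_1'[OF ints(3)[of 0 L]] x0 unfolding B1_def
    by (simp add: continuous_on_eq_continuous_within)
  have cB2: "continuous (at x0 within {0..L}) B2"
    using indefinite_integral_continuous_1'[OF ints(4)[of 0 L]] x0 unfolding B2_def
    by (simp add: continuous_on_eq_continuous_within)
  have D: "((\<lambda>x. (a1 x - a1 x0) * A1 x + (a2 x - a2 x0) * A2 x + (b1 x - b1 x0) * B1 x + (b2 x - b2 x0) * B2 x + R x)
      has_real_derivative (d1 * A1 x0 + d2 * A2 x0 + e1 * B1 x0 + e2 * B2 x0 + 0)) (at x0 within {0..L})"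
    by (intro DERIV_add deriv_prod_cont d1 d2 e1 e2 cA1 cA2 cB1 cB2 RD)
  have "(\<lambda>x. (a1 x - a1 x0) * A1 x + (a2 x - a2 x0) * A2 x + (b1 x - b1 x0) * B1 x + (b2 x - b2 x0) * B2 x + R x)
     = (\<lambda>x. a1 x * A1 x + a2 x * A2 x + b1 x * B1 x + b2 x * B2 x)"
    unfolding R_def by (simp add: fun_eq_iff algebra_simps)
  with D show ?thesis unfolding A1_def A2_def B1_def B2_def f1_def f2_def g1_def g2_def by simp
qed


definition "gA1 M L x = (L - x) / (M * L)"
definition "gA2 M L x = - sinh (sqrt M * (L - x)) / (M * sqrt M * sinh (sqrt M * L))"
definition "gB1 M L x = x / (M * L)"
definition "gB2 M L x = - sinh (sqrt M * x) / (M * sqrt M * sinh (sqrt M * L))"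
definition "gA2d1 M L x = cosh (sqrt M * (L - x)) / (M * sinh (sqrt M * L))"
definition "gA2d2 M L x = - sqrt M * sinh (sqrt M * (L - x)) / (M * sinh (sqrt M * L))"
definition "gA2d3 M L x = sqrt M * sqrt M * cosh (sqrt M * (L - x)) / (M * sinh (sqrt M * L))"
definition "gA2d4 M L x = - sqrt M * sqrt M * sqrt M * sinh (sqrt M * (L - x)) / (M * sinh (sqrt M * L))"
definition "gB2d1 M L x = - cosh (sqrt M * x) / (M * sinh (sqrt M * L))"
definition "gB2d2 M L x = - sqrt M * sinh (sqrt M * x) / (M * sinh (sqrt M * L))"
definition "gB2d3 M L x = - sqrt M * sqrt M * cosh (sqrt M * x) / (M * sinh (sqrt M * L))"
definition "gB2d4 M L x = - sqrt M * sqrt M * sqrt M * sinh (sqrt M * x) / (M * sinh (sqrt M * L))"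

context
  fixes M L :: real
  assumes L: "L > 0" and M: "M > 0"
begin

lemma sM: "sqrt M > 0" "sqrt M * sqrt M = M" using M by auto

lemma sS: "sinh (sqrt M * L) > 0" using sM L by simp

lemma green_left: "0 \<le> s \<Longrightarrow> s \<le> x \<Longrightarrow> green M L x s = gA1 M L x * s + gA2 M L x * sinh (sqrt M * s)"
  unfolding green_def gA1_def gA2_def by (auto simp: field_simps)

lemma green_right: "x \<le> s \<Longrightarrow> green M L x s = gB1 M L x * (L - s) + gB2 M L x * sinh (sqrt M * (L - s))"
  unfolding green_def gB1_def gB2_def by (auto simp: field_simps)

lemma dA1: "(gA1 M L has_real_derivative (- 1 / (M * L))) (at x within S)"
  unfolding gA1_def using M L by (auto intro!: derivative_eq_intros simp: field_simps)
lemma dB1: "(gB1 M L has_real_derivative (1 / (M * L))) (at x within S)"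
  unfolding gB1_def using M L by (auto intro!: derivative_eq_intros simp: field_simps)
lemma dA2: "(gA2 M L has_real_derivative gA2d1 M L x) (at x within S)"
  unfolding gA2_def gA2d1_def using sM sS by (auto intro!: derivative_eq_intros simp: field_simps)
lemma dA2d1: "(gA2d1 M L has_real_derivative gA2d2 M L x) (at x within S)"
  unfolding gA2d1_def gA2d2_def using sM sS by (auto intro!: derivative_eq_intros simp: field_simps)
lemma dA2d2: "(gA2d2 M L has_real_derivative gA2d3 M L x) (at x within S)"
  unfolding gA2d2_def gA2d3_def using sM sS by (auto intro!: derivative_eq_intros simp: field_simps)
lemma dA2d3: "(gA2d3 M L has_real_derivative gA2d4 M L x) (at x within S)"
  unfolding gA2d3_def gA2d4_def using sM sS by (auto intro!: derivative_eq_intros simp: field_simps)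
lemma dB2: "(gB2 M L has_real_derivative gB2d1 M L x) (at x within S)"
  unfolding gB2_def gB2d1_def using sM sS by (auto intro!: derivative_eq_intros simp: field_simps)
lemma dB2d1: "(gB2d1 M L has_real_derivative gB2d2 M L x) (at x within S)"
  unfolding gB2d1_def gB2d2_def using sM sS by (auto intro!: derivative_eq_intros simp: field_simps)
lemma dB2d2: "(gB2d2 M L has_real_derivative gB2d3 M L x) (at x within S)"
  unfolding gB2d2_def gB2d3_def using sM sS by (auto intro!: derivative_eq_intros simp: field_simps)
lemma dB2d3: "(gB2d3 M L has_real_derivative gB2d4 M L x) (at x within S)"
  unfolding gB2d3_def gB2d4_def using sM sS by (auto intro!: derivative_eq_intros simp: field_simps)

lemma sinh_split: "sinh (sqrt M * x) * cosh (sqrt M * (L - x)) + cosh (sqrt M * x) * sinh (sqrt M * (L - x)) = sinh (sqrt M * L)"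
  using sinh_add[of "sqrt M * x" "sqrt M * (L - x)"] by (simp add: algebra_simps)

lemma diag1: "- 1 / (M * L) * x + gA2d1 M L x * sinh (sqrt M * x) = 1 / (M * L) * (L - x) + gB2d1 M L x * sinh (sqrt M * (L - x))"
proof -
  have "gA2d1 M L x * sinh (sqrt M * x) - gB2d1 M L x * sinh (sqrt M * (L - x))
      = (sinh (sqrt M * x) * cosh (sqrt M * (L - x)) + cosh (sqrt M * x) * sinh (sqrt M * (L - x))) / (M * sinh (sqrt M * L))"
    unfolding gA2d1_def gB2d1_def by (simp add: add_divide_distrib diff_divide_distrib)
  also have "\<dots> = 1 / M" using sS M L by (simp add: sinh_split)
  finally have a: "gA2d1 M L x * sinh (sqrt M * x) - gB2d1 M L x * sinh (sqrt M * (L - x)) = 1 / M" .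
  have b: "1 / (M * L) * (L - x) + 1 / (M * L) * x = 1 / M" using M L by (simp add: field_simps)
  from a b show ?thesis by linarith
qed

lemma diag2: "gA2d2 M L x * sinh (sqrt M * x) = gB2d2 M L x * sinh (sqrt M * (L - x))"
  unfolding gA2d2_def gB2d2_def by (simp add: field_simps)

lemma diag3: "- 1 * 1 + gA2d3 M L x * sinh (sqrt M * x) = 0 * (L - x) + gB2d3 M L x * sinh (sqrt M * (L - x))"
proof -
  have "gA2d3 M L x * sinh (sqrt M * x) - gB2d3 M L x * sinh (sqrt M * (L - x))
      = sqrt M * sqrt M * (sinh (sqrt M * x) * cosh (sqrt M * (L - x)) + cosh (sqrt M * x) * sinh (sqrt M * (L - x))) / (M * sinh (sqrt M * L))"
    unfolding gA2d3_def gB2d3_def by (simp add: add_divide_distrib diff_divide_distrib algebra_simps)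
  also have "\<dots> = 1" using sS M sM L by (simp add: sinh_split)
  finally show ?thesis by simp
qed

lemma d4A: "gA2d4 M L x = M * gA2d2 M L x" unfolding gA2d4_def gA2d2_def using sM by (simp add: field_simps)
lemma d4B: "gB2d4 M L x = M * gB2d2 M L x" unfolding gB2d4_def gB2d2_def using sM by (simp add: field_simps)

definition "CC = 1 + sqrt M * cosh (sqrt M * L)"

lemma CC: "CC \<ge> 1" unfolding CC_def using sM L by (simp add: add_increasing2)

lemma lip_id: "\<bar>s - t\<bar> \<le> CC * \<bar>s - t\<bar>" using CC by (simp add: mult_le_cancel_right1)
lemma lip_Lm: "\<bar>(L - s) - (L - t)\<bar> \<le> CC * \<bar>s - t\<bar>" using CC by (simp add: mult_le_cancel_right1 abs_minus_commute)
lemma lip_1: "\<bar>(1::real) - 1\<bar> \<le> CC * \<bar>s - t\<bar>" using CC by simp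

lemma lip_sinh: "s \<in> {0..L} \<Longrightarrow> t \<in> {0..L} \<Longrightarrow> \<bar>sinh (sqrt M * s) - sinh (sqrt M * t)\<bar> \<le> CC * \<bar>s - t\<bar>"
proof (rule lip_from_deriv[where f' = "\<lambda>x. cosh (sqrt M * x) * sqrt M"])
  show "((\<lambda>s. sinh (sqrt M * s)) has_real_derivative cosh (sqrt M * x) * sqrt M) (at x within {0..L})" for x
    by (auto intro!: derivative_eq_intros)
  show "\<bar>cosh (sqrt M * x) * sqrt M\<bar> \<le> CC" if "x \<in> {0..L}" for x
  proof -
    have "cosh (sqrt M * x) \<le> cosh (sqrt M * L)" using that sM
      by (subst cosh_real_nonneg_le_iff) (auto intro: mult_left_mono)
    then have "cosh (sqrt M * x) * sqrt M \<le> cosh (sqrt M * L) * sqrt M" using sM by (intro mult_right_mono) auto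
    moreover have "cosh (sqrt M * x) * sqrt M \<ge> 0" using sM by simp
    ultimately show ?thesis unfolding CC_def by (simp add: mult_ac)
  qed
qed

lemma lip_sinhL: "s \<in> {0..L} \<Longrightarrow> t \<in> {0..L} \<Longrightarrow> \<bar>sinh (sqrt M * (L - s)) - sinh (sqrt M * (L - t))\<bar> \<le> CC * \<bar>s - t\<bar>"
  using lip_sinh[of "L - s" "L - t"] by (simp add: abs_minus_commute)

end

context
  fixes M L :: real
  assumes L: "L > 0" and M: "M > 0"
begin

lemma kinkG:
  fixes q a1 a2 b1 b2 :: "real \<Rightarrow> real"
  assumes q: "q absolutely_integrable_on {0..L}" and x0: "x0 \<in> {0..L}"
    and d1: "(a1 has_real_derivative d1) (at x0 within {0..L})"
    and d2: "(a2 has_real_derivative d2) (at x0 within {0..L})"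
    and e1: "(b1 has_real_derivative e1) (at x0 within {0..L})"
    and e2: "(b2 has_real_derivative e2) (at x0 within {0..L})"
    and diag: "a1 x0 * x0 + a2 x0 * sinh (sqrt M * x0) = b1 x0 * (L - x0) + b2 x0 * sinh (sqrt M * (L - x0))"
  shows "((\<lambda>x. a1 x * integral {0..x} (\<lambda>s. s * q s) + a2 x * integral {0..x} (\<lambda>s. sinh (sqrt M * s) * q s)
             + b1 x * integral {x..L} (\<lambda>s. (L - s) * q s) + b2 x * integral {x..L} (\<lambda>s. sinh (sqrt M * (L - s)) * q s))
         has_real_derivative
           (d1 * integral {0..x0} (\<lambda>s. s * q s) + d2 * integral {0..x0} (\<lambda>s. sinh (sqrt M * s) * q s)
             + e1 * integral {x0..L} (\<lambda>s. (L - s) * q s) + e2 * integral {x0..L} (\<lambda>s. sinh (sqrt M * (L - s)) * q s)))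
         (at x0 within {0..L})"
  by (rule kink_deriv[where alA="\<lambda>s. s" and alB="\<lambda>s. sinh (sqrt M * s)" and beA="\<lambda>s. L - s"
        and beB="\<lambda>s. sinh (sqrt M * (L - s))" and C="CC M L", OF q _ _ _ _ _ _ _ _ d1 d2 e1 e2 diag x0])
     (auto intro!: continuous_intros lip_id[OF L M] lip_Lm[OF L M] lip_sinh[OF L M] lip_sinhL[OF L M]
       simp: abs_minus_commute CC[OF L M] order_trans[OF zero_le_one CC[OF L M]])

lemma kinkP:
  fixes q a1 a2 b1 b2 :: "real \<Rightarrow> real"
  assumes q: "q absolutely_integrable_on {0..L}" and x0: "x0 \<in> {0..L}"
    and d1: "(a1 has_real_derivative d1) (at x0 within {0..L})"
    and d2: "(a2 has_real_derivative d2) (at x0 within {0..L})"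
    and e1: "(b1 has_real_derivative e1) (at x0 within {0..L})"
    and e2: "(b2 has_real_derivative e2) (at x0 within {0..L})"
    and diag: "a1 x0 * 1 + a2 x0 * sinh (sqrt M * x0) = b1 x0 * (L - x0) + b2 x0 * sinh (sqrt M * (L - x0))"
  shows "((\<lambda>x. a1 x * integral {0..x} (\<lambda>s. 1 * q s) + a2 x * integral {0..x} (\<lambda>s. sinh (sqrt M * s) * q s)
             + b1 x * integral {x..L} (\<lambda>s. (L - s) * q s) + b2 x * integral {x..L} (\<lambda>s. sinh (sqrt M * (L - s)) * q s))
         has_real_derivative
           (d1 * integral {0..x0} (\<lambda>s. 1 * q s) + d2 * integral {0..x0} (\<lambda>s. sinh (sqrt M * s) * q s)
             + e1 * integral {x0..L} (\<lambda>s. (L - s) * q s) + e2 * integral {x0..L} (\<lambda>s. sinh (sqrt M * (L - s)) * q s)))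
         (at x0 within {0..L})"
  by (rule kink_deriv[where alA="\<lambda>s. 1" and alB="\<lambda>s. sinh (sqrt M * s)" and beA="\<lambda>s. L - s"
        and beB="\<lambda>s. sinh (sqrt M * (L - s))" and C="CC M L", OF q _ _ _ _ _ _ _ _ d1 d2 e1 e2 diag x0])
     (auto intro!: continuous_intros lip_1[OF L M] lip_id[OF L M] lip_Lm[OF L M] lip_sinh[OF L M] lip_sinhL[OF L M]
       simp: abs_minus_commute CC[OF L M] order_trans[OF zero_le_one CC[OF L M]])

end

context
  fixes M L :: real
  assumes L: "L > 0" and M: "M > 0"
begin

lemma green_sol:
  fixes q :: "real \<Rightarrow> real"
  assumes q: "q absolutely_integrable_on {0..L}"
  shows "\<exists>y1 y2 y3. (\<forall>x\<in>{0..L}.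
      ((\<lambda>x. integral {0..L} (\<lambda>s. green M L x s * q s)) has_real_derivative y1 x) (at x within {0..L}) \<and>
      (y1 has_real_derivative y2 x) (at x within {0..L}) \<and>
      (y2 has_real_derivative y3 x) (at x within {0..L}) \<and>
      y3 x = y3 0 + integral {0..x} (\<lambda>t. q t + M * y2 t)) \<and>
      integral {0..L} (\<lambda>s. green M L 0 s * q s) = 0 \<and> integral {0..L} (\<lambda>s. green M L L s * q s) = 0 \<and>
      y2 0 = 0 \<and> y2 L = 0 \<and> continuous_on {0..L} y2"
proof -
  define A1 where "A1 = (\<lambda>x. integral {0..x} (\<lambda>s. s * q s))"
  define A2 where "A2 = (\<lambda>x. integral {0..x} (\<lambda>s. sinh (sqrt M * s) * q s))"
  define B1 where "B1 = (\<lambda>x. integral {x..L} (\<lambda>s. (L - s) * q s))"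
  define B2 where "B2 = (\<lambda>x. integral {x..L} (\<lambda>s. sinh (sqrt M * (L - s)) * q s))"
  define Q where "Q = (\<lambda>x. integral {0..x} (\<lambda>s. 1 * q s))"
  define Y where "Y = (\<lambda>x. integral {0..L} (\<lambda>s. green M L x s * q s))"
  define u0 where "u0 = (\<lambda>x. gA1 M L x * A1 x + gA2 M L x * A2 x + gB1 M L x * B1 x + gB2 M L x * B2 x)"
  define u1 where "u1 = (\<lambda>x. (- 1 / (M * L)) * A1 x + gA2d1 M L x * A2 x + (1 / (M * L)) * B1 x + gB2d1 M L x * B2 x)"
  define u2 where "u2 = (\<lambda>x. 0 * A1 x + gA2d2 M L x * A2 x + 0 * B1 x + gB2d2 M L x * B2 x)"
  define u3 where "u3 = (\<lambda>x. 0 * A1 x + gA2d3 M L x * A2 x + 0 * B1 x + gB2d3 M L x * B2 x)"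
  define Phi where "Phi = (\<lambda>x. (- 1) * Q x + gA2d3 M L x * A2 x + 0 * B1 x + gB2d3 M L x * B2 x)"
  have ai: "(\<lambda>s. al s * q s) absolutely_integrable_on {0..L}" if "continuous_on {0..L} al" for al
    by (rule absint_cont_mult[OF that q])
  have ii: "(\<lambda>s. al s * q s) integrable_on {u..v}" if "continuous_on {0..L} al" "0 \<le> u" "v \<le> L" for al u v
    using absint_sub(1)[OF ai[OF that(1)] that(2,3)] .
  have Yrep: "Y x = u0 x" if x: "x \<in> {0..L}" for x
  proof -
    have "((\<lambda>s. green M L x s * q s) has_integral (gA1 M L x * A1 x + gA2 M L x * A2 x)) {0..x}"
    proof (rule has_integral_eq)
      show "((\<lambda>s. gA1 M L x * (s * q s) + gA2 M L x * (sinh (sqrt M * s) * q s)) has_integral (gA1 M L x * A1 x + gA2 M L x * A2 x)) {0..x}"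
        unfolding A1_def A2_def using x
        by (intro has_integral_add has_integral_mult_right integrable_integral ii[where al="\<lambda>s. s"] ii[where al="\<lambda>s. sinh (sqrt M * s)"])
          (auto intro!: continuous_intros)
      show "gA1 M L x * (s * q s) + gA2 M L x * (sinh (sqrt M * s) * q s) = green M L x s * q s" if "s \<in> {0..x}" for s
        using green_left[OF L M, of s x] that by (simp add: algebra_simps)
    qed
    moreover have "((\<lambda>s. green M L x s * q s) has_integral (gB1 M L x * B1 x + gB2 M L x * B2 x)) {x..L}"
    proof (rule has_integral_eq)
      show "((\<lambda>s. gB1 M L x * ((L - s) * q s) + gB2 M L x * (sinh (sqrt M * (L - s)) * q s)) has_integral (gB1 M L x * B1 x + gB2 M L x * B2 x)) {x..L}"
        unfolding B1_def B2_def using x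
        by (intro has_integral_add has_integral_mult_right integrable_integral ii[where al="\<lambda>s. L - s"] ii[where al="\<lambda>s. sinh (sqrt M * (L - s))"])
          (auto intro!: continuous_intros)
      show "gB1 M L x * ((L - s) * q s) + gB2 M L x * (sinh (sqrt M * (L - s)) * q s) = green M L x s * q s" if "s \<in> {x..L}" for s
      proof -
        have g: "green M L x s = gB1 M L x * (L - s) + gB2 M L x * sinh (sqrt M * (L - s))"
          using green_right[OF L M, of x s] that by simp
        show ?thesis unfolding g by (simp add: algebra_simps)
      qed
    qed
    ultimately have "((\<lambda>s. green M L x s * q s) has_integral ((gA1 M L x * A1 x + gA2 M L x * A2 x) + (gB1 M L x * B1 x + gB2 M L x * B2 x))) {0..L}"
      using has_integral_combine[of 0 x L] x by simp
    then have "((\<lambda>s. green M L x s * q s) has_integral u0 x) {0..L}"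
      unfolding u0_def by (simp add: add.assoc)
    then show ?thesis unfolding Y_def by (rule integral_unique)
  qed
  have D0: "(Y has_real_derivative u1 x) (at x within {0..L})" if x: "x \<in> {0..L}" for x
  proof (rule has_field_derivative_transform_within[OF _ zero_less_one x])
    show "(u0 has_real_derivative u1 x) (at x within {0..L})"
      unfolding u0_def u1_def A1_def A2_def B1_def B2_def
      by (rule kinkG[OF L M q x dA1[OF L M] dA2[OF L M] dB1[OF L M] dB2[OF L M]])
        (simp add: gA1_def gA2_def gB1_def gB2_def field_simps)
    show "u0 y = Y y" if "y \<in> {0..L}" "dist y x < 1" for y using Yrep that by simp
  qed
  have D1: "(u1 has_real_derivative u2 x) (at x within {0..L})" if x: "x \<in> {0..L}" for x
    unfolding u1_def u2_def A1_def A2_def B1_def B2_def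
    by (rule kinkG[OF L M q x DERIV_const dA2d1[OF L M] DERIV_const dB2d1[OF L M]])
      (rule diag1[OF L M])
  have D2: "(u2 has_real_derivative u3 x) (at x within {0..L})" if x: "x \<in> {0..L}" for x
    unfolding u2_def u3_def A1_def A2_def B1_def B2_def
    by (rule kinkG[OF L M q x DERIV_const dA2d2[OF L M] DERIV_const dB2d2[OF L M]])
      (simp add: diag2[OF L M])
  have D3: "(Phi has_real_derivative M * u2 x) (at x within {0..L})" if x: "x \<in> {0..L}" for x
  proof -
    have "(Phi has_real_derivative (0 * Q x + gA2d4 M L x * A2 x + 0 * B1 x + gB2d4 M L x * B2 x)) (at x within {0..L})"
      unfolding Phi_def Q_def A2_def B1_def B2_def
      by (rule kinkP[OF L M q x DERIV_const dA2d3[OF L M] DERIV_const dB2d3[OF L M]])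
        (rule diag3[OF L M])
    then show ?thesis unfolding u2_def by (simp add: d4A[OF L M] d4B[OF L M] algebra_simps)
  qed
  have cu2: "continuous_on {0..L} u2"
    using D2 DERIV_continuous continuous_on_eq_continuous_within by blast
  have Phiu3: "Phi x = u3 x - Q x" for x unfolding Phi_def u3_def by simp
  have Q0: "Q 0 = 0" unfolding Q_def by simp
  have qi: "q integrable_on {0..x}" if "x \<in> {0..L}" for x using absint_sub(1)[OF q, of 0 x] that by auto
  have u3eq: "u3 x = u3 0 + integral {0..x} (\<lambda>t. q t + M * u2 t)" if x: "x \<in> {0..L}" for x
  proof -
    have "((\<lambda>t. M * u2 t) has_integral (Phi x - Phi 0)) {0..x}"
    proof (rule fundamental_theorem_of_calculus)
      show "0 \<le> x" using x by simp
      fix t assume t: "t \<in> {0..x}"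
      have tL: "t \<in> {0..L}" using t x by auto
      have "(Phi has_real_derivative M * u2 t) (at t within {0..x})"
        by (rule has_field_derivative_subset[OF D3[OF tL]]) (use x in auto)
      then show "(Phi has_vector_derivative M * u2 t) (at t within {0..x})"
        by (simp add: has_real_derivative_iff_has_vector_derivative)
    qed
    moreover have "(q has_integral Q x) {0..x}" unfolding Q_def using integrable_integral[OF qi[OF x]] by simp
    ultimately have "((\<lambda>t. q t + M * u2 t) has_integral (Q x + (Phi x - Phi 0))) {0..x}"
      by (intro has_integral_add)
    then have "integral {0..x} (\<lambda>t. q t + M * u2 t) = Q x + (Phi x - Phi 0)" by (rule integral_unique)
    then show ?thesis using Phiu3[of x] Phiu3[of 0] Q0 by simp
  qed
  have BC: "Y 0 = 0" "Y L = 0" "u2 0 = 0" "u2 L = 0"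
    using Yrep[of 0] Yrep[of L] L
    by (auto simp: u0_def u2_def A1_def A2_def B1_def B2_def gA1_def gA2_def gB1_def gB2_def gA2d2_def gB2d2_def)
  show ?thesis
    apply (rule exI[of _ u1], rule exI[of _ u2], rule exI[of _ u3])
    using D0 D1 D2 u3eq BC cu2 unfolding Y_def by blast
qed

end

lemma deriv_cont_on:
  assumes "\<And>x. x \<in> S \<Longrightarrow> (f has_real_derivative f' x) (at x within S)"
  shows "continuous_on S f"
  using assms DERIV_continuous continuous_on_eq_continuous_within by blast

lemma ftc0:
  fixes F :: "real \<Rightarrow> real"
  assumes "0 \<le> L" "\<And>x. x \<in> {0..L} \<Longrightarrow> (F has_real_derivative f x) (at x within {0..L})"
  shows "(f has_integral (F L - F 0)) {0..L}"
  using assms by (intro fundamental_theorem_of_calculus) (auto simp: has_real_derivative_iff_has_vector_derivative[symmetric])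

context
  fixes M L :: real
  assumes L: "L > 0" and M: "M > 0"
begin

lemma energy:
  fixes y y1 y2 y3 :: "real \<Rightarrow> real"
  assumes D: "\<And>x. x \<in> {0..L} \<Longrightarrow> (y has_real_derivative y1 x) (at x within {0..L})"
             "\<And>x. x \<in> {0..L} \<Longrightarrow> (y1 has_real_derivative y2 x) (at x within {0..L})"
             "\<And>x. x \<in> {0..L} \<Longrightarrow> (y2 has_real_derivative y3 x) (at x within {0..L})"
             "\<And>x. x \<in> {0..L} \<Longrightarrow> (y3 has_real_derivative M * y2 x + d) (at x within {0..L})"
    and BC: "y 0 = 0" "y L = 0" "y2 0 = 0" "y2 L = 0"
  shows "integral {0..L} (\<lambda>x. (y2 x)\<^sup>2) + M * integral {0..L} (\<lambda>x. (y1 x)\<^sup>2) = d * integral {0..L} y"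
    and "12 * (integral {0..L} y)\<^sup>2 \<le> L ^ 3 * integral {0..L} (\<lambda>x. (y1 x)\<^sup>2)"
    and "0 \<le> integral {0..L} (\<lambda>x. (y1 x)\<^sup>2)" and "0 \<le> integral {0..L} (\<lambda>x. (y2 x)\<^sup>2)"
proof -
  have cy: "continuous_on {0..L} y" using D(1) by (rule deriv_cont_on)
  have cy1: "continuous_on {0..L} y1" using D(2) by (rule deriv_cont_on)
  have cy2: "continuous_on {0..L} y2" using D(3) by (rule deriv_cont_on)
  have hi: "(f has_integral integral {0..L} f) {0..L}" if "continuous_on {0..L} f" for f :: "real \<Rightarrow> real"
    using integrable_continuous_real[OF that] by (simp add: integrable_integral)
  define c where "c = integral {0..L} y"
  define P where "P = integral {0..L} (\<lambda>x. (y1 x)\<^sup>2)"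
  define R where "R = integral {0..L} (\<lambda>x. (y2 x)\<^sup>2)"
  define I1 where "I1 = integral {0..L} (\<lambda>x. y2 x * y x)"
  define J where "J = integral {0..L} (\<lambda>x. (x - L/2) * y1 x)"
  have hc: "(y has_integral c) {0..L}" unfolding c_def by (rule hi[OF cy])
  have hP: "((\<lambda>x. (y1 x)\<^sup>2) has_integral P) {0..L}" unfolding P_def by (rule hi) (intro continuous_intros cy1)
  have hR: "((\<lambda>x. (y2 x)\<^sup>2) has_integral R) {0..L}" unfolding R_def by (rule hi) (intro continuous_intros cy2)
  have hI1: "((\<lambda>x. y2 x * y x) has_integral I1) {0..L}" unfolding I1_def by (rule hi) (intro continuous_intros cy cy2)
  have hJ: "((\<lambda>x. (x - L/2) * y1 x) has_integral J) {0..L}" unfolding J_def by (rule hi) (intro continuous_intros cy1)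
  show P0: "0 \<le> integral {0..L} (\<lambda>x. (y1 x)\<^sup>2)" using has_integral_nonneg[OF hP] P_def by simp
  show R0: "0 \<le> integral {0..L} (\<lambda>x. (y2 x)\<^sup>2)" using has_integral_nonneg[OF hR] R_def by simp
  have F1: "((\<lambda>x. (M * y2 x + d) * y x + y3 x * y1 x - (y3 x * y1 x + y2 x * y2 x)) has_integral
       ((y3 L * y L - y2 L * y1 L) - (y3 0 * y 0 - y2 0 * y1 0))) {0..L}"
    using L by (intro ftc0) (auto intro!: derivative_eq_intros D)
  have F1': "((\<lambda>x. M * (y2 x * y x) + d * y x - (y2 x)\<^sup>2) has_integral (M * I1 + d * c - R)) {0..L}"
    by (intro has_integral_diff has_integral_add has_integral_mult_right hI1 hc hR)
  have e1: "M * I1 + d * c - R = 0"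
  proof -
    have "(\<lambda>x. (M * y2 x + d) * y x + y3 x * y1 x - (y3 x * y1 x + y2 x * y2 x)) = (\<lambda>x. M * (y2 x * y x) + d * y x - (y2 x)\<^sup>2)"
      by (auto simp: fun_eq_iff algebra_simps power2_eq_square)
    with F1 have "((\<lambda>x. M * (y2 x * y x) + d * y x - (y2 x)\<^sup>2) has_integral
       ((y3 L * y L - y2 L * y1 L) - (y3 0 * y 0 - y2 0 * y1 0))) {0..L}" by simp
    from has_integral_unique[OF F1' this] show ?thesis using BC by simp
  qed
  have F2: "((\<lambda>x. y2 x * y x + y1 x * y1 x) has_integral (y1 L * y L - y1 0 * y 0)) {0..L}"
    using L by (intro ftc0) (auto intro!: derivative_eq_intros D)
  have F2': "((\<lambda>x. y2 x * y x + y1 x * y1 x) has_integral (I1 + P)) {0..L}"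
    using has_integral_add[OF hI1 hP] by (simp add: power2_eq_square)
  have e2: "I1 + P = 0" using has_integral_unique[OF F2 F2'] BC by simp
  have I1P: "I1 = - P" using e2 by linarith
  have "M * I1 = - (M * P)" unfolding I1P by simp
  then have "R + M * P = d * c" using e1 by linarith
  then show "integral {0..L} (\<lambda>x. (y2 x)\<^sup>2) + M * integral {0..L} (\<lambda>x. (y1 x)\<^sup>2) = d * integral {0..L} y"
    unfolding R_def P_def c_def .
  have F3: "((\<lambda>x. y x + (x - L/2) * y1 x) has_integral ((L - L/2) * y L - (0 - L/2) * y 0)) {0..L}"
    using L by (intro ftc0[where F="\<lambda>x. (x - L/2) * y x"]) (auto intro!: derivative_eq_intros D)
  have e3: "c + J = 0" using has_integral_unique[OF F3 has_integral_add[OF hc hJ]] BC by simp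
  have F4: "((\<lambda>x. (x - L/2)^2) has_integral ((L - L/2)^3/3 - (0 - L/2)^3/3)) {0..L}"
    using L by (intro ftc0[where F="\<lambda>x. (x - L/2)^3/3"]) (auto intro!: derivative_eq_intros)
  have F4': "((\<lambda>x. (x - L/2)^2) has_integral L^3/12) {0..L}"
  proof -
    have "(L - L/2)^3/3 - (0 - L/2)^3/3 = L^3/12" by (simp add: field_simps power3_eq_cube)
    then show ?thesis using F4 by (simp only:)
  qed
  define lam where "lam = 12 * c / L^3"
  have hsq: "((\<lambda>x. (y1 x)\<^sup>2 + 2 * lam * ((x - L/2) * y1 x) + lam^2 * (x - L/2)^2) has_integral (P + 2 * lam * J + lam^2 * (L^3/12))) {0..L}"
    by (intro has_integral_add has_integral_mult_right hP hJ F4')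
  have "0 \<le> P + 2 * lam * J + lam^2 * (L^3/12)"
  proof (rule has_integral_nonneg[OF hsq])
    fix x
    have "(y1 x)\<^sup>2 + 2 * lam * ((x - L/2) * y1 x) + lam^2 * (x - L/2)^2 = (y1 x + lam * (x - L/2))\<^sup>2"
      by (simp add: power2_eq_square algebra_simps)
    then show "0 \<le> (y1 x)\<^sup>2 + 2 * lam * ((x - L/2) * y1 x) + lam^2 * (x - L/2)^2" by simp
  qed
  moreover have "2 * lam * J + lam^2 * (L^3/12) = - 12 * c^2 / L^3"
  proof -
    have Jc: "J = - c" using e3 by linarith
    show ?thesis using L unfolding lam_def Jc by (simp add: field_simps power2_eq_square power3_eq_cube)
  qed
  ultimately have "12 * c^2 / L^3 \<le> P" by simp
  then show "12 * (integral {0..L} y)\<^sup>2 \<le> L ^ 3 * integral {0..L} (\<lambda>x. (y1 x)\<^sup>2)"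
    using L unfolding c_def P_def by (simp add: divide_le_eq mult.commute)
qed

end

lemma sol_diff:
  assumes L: "L > 0" and y: "is_solution M N L p y" and z: "is_solution M N L p z"
  shows "is_solution M N L (\<lambda>x. 0) (\<lambda>x. y x - z x)"
proof -
  obtain y1 y2 y3 g S where g: "g absolutely_integrable_on {0..L}"
    and yd: "\<forall>x\<in>{0..L}. (y has_real_derivative y1 x) (at x within {0..L}) \<and>
            (y1 has_real_derivative y2 x) (at x within {0..L}) \<and>
            (y2 has_real_derivative y3 x) (at x within {0..L}) \<and>
            y3 x = y3 0 + integral {0..x} g"
    and S: "negligible S" "\<forall>x\<in>{0<..<L} - S. g x - M * y2 x + N * integral {0..L} y = p x"
    and yb: "y 0 = 0" "y L = 0" "y2 0 = 0" "y2 L = 0"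
    using y unfolding is_solution_def by blast
  obtain z1 z2 z3 h T where h: "h absolutely_integrable_on {0..L}"
    and zd: "\<forall>x\<in>{0..L}. (z has_real_derivative z1 x) (at x within {0..L}) \<and>
            (z1 has_real_derivative z2 x) (at x within {0..L}) \<and>
            (z2 has_real_derivative z3 x) (at x within {0..L}) \<and>
            z3 x = z3 0 + integral {0..x} h"
    and T: "negligible T" "\<forall>x\<in>{0<..<L} - T. h x - M * z2 x + N * integral {0..L} z = p x"
    and zb: "z 0 = 0" "z L = 0" "z2 0 = 0" "z2 L = 0"
    using z unfolding is_solution_def by blast
  have cy: "continuous_on {0..L} y" using yd by (intro deriv_cont_on) auto
  have cz: "continuous_on {0..L} z" using zd by (intro deriv_cont_on) auto
  have int: "integral {0..L} (\<lambda>x. y x - z x) = integral {0..L} y - integral {0..L} z"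
    using integrable_continuous_real[OF cy] integrable_continuous_real[OF cz] by (rule integral_diff)
  have A: "(\<lambda>t. g t - h t) absolutely_integrable_on {0..L}" using g h by (rule set_integral_diff(1))
  have B: "((\<lambda>x. y x - z x) has_real_derivative y1 x - z1 x) (at x within {0..L}) \<and>
      ((\<lambda>x. y1 x - z1 x) has_real_derivative y2 x - z2 x) (at x within {0..L}) \<and>
      ((\<lambda>x. y2 x - z2 x) has_real_derivative y3 x - z3 x) (at x within {0..L}) \<and>
      y3 x - z3 x = y3 0 - z3 0 + integral {0..x} (\<lambda>t. g t - h t)" if x: "x \<in> {0..L}" for x
  proof (intro conjI)
    from yd x have yx: "(y has_real_derivative y1 x) (at x within {0..L})"
            "(y1 has_real_derivative y2 x) (at x within {0..L})"
            "(y2 has_real_derivative y3 x) (at x within {0..L})"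
            "y3 x = y3 0 + integral {0..x} g" by blast+
    from zd x have zx: "(z has_real_derivative z1 x) (at x within {0..L})"
            "(z1 has_real_derivative z2 x) (at x within {0..L})"
            "(z2 has_real_derivative z3 x) (at x within {0..L})"
            "z3 x = z3 0 + integral {0..x} h" by blast+
    show "((\<lambda>x. y x - z x) has_real_derivative y1 x - z1 x) (at x within {0..L})"
      by (rule DERIV_diff[OF yx(1) zx(1)])
    show "((\<lambda>x. y1 x - z1 x) has_real_derivative y2 x - z2 x) (at x within {0..L})"
      by (rule DERIV_diff[OF yx(2) zx(2)])
    show "((\<lambda>x. y2 x - z2 x) has_real_derivative y3 x - z3 x) (at x within {0..L})"
      by (rule DERIV_diff[OF yx(3) zx(3)])
    have "integral {0..x} (\<lambda>t. g t - h t) = integral {0..x} g - integral {0..x} h"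
      using absint_sub(1)[OF g, of 0 x] absint_sub(1)[OF h, of 0 x] x by (intro integral_diff) auto
    then show "y3 x - z3 x = y3 0 - z3 0 + integral {0..x} (\<lambda>t. g t - h t)"
      using yx(4) zx(4) by simp
  qed
  have C1: "negligible (S \<union> T)" by (rule negligible_Un[OF S(1) T(1)])
  have C2: "\<forall>x\<in>{0<..<L} - (S \<union> T). g x - h x - M * (y2 x - z2 x) + N * integral {0..L} (\<lambda>x. y x - z x) = 0"
  proof
    fix x assume "x \<in> {0<..<L} - (S \<union> T)"
    then have "g x - M * y2 x + N * integral {0..L} y = p x" "h x - M * z2 x + N * integral {0..L} z = p x"
      using S(2) T(2) by auto
    then show "g x - h x - M * (y2 x - z2 x) + N * integral {0..L} (\<lambda>x. y x - z x) = 0"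
      unfolding int by (simp add: algebra_simps)
  qed
  have B': "\<forall>x\<in>{0..L}. ((\<lambda>x. y x - z x) has_real_derivative y1 x - z1 x) (at x within {0..L}) \<and>
      ((\<lambda>x. y1 x - z1 x) has_real_derivative y2 x - z2 x) (at x within {0..L}) \<and>
      ((\<lambda>x. y2 x - z2 x) has_real_derivative y3 x - z3 x) (at x within {0..L}) \<and>
      y3 x - z3 x = y3 0 - z3 0 + integral {0..x} (\<lambda>t. g t - h t)" using B by blast
  have C: "\<exists>S. negligible S \<and> (\<forall>x\<in>{0<..<L} - S. g x - h x - M * (y2 x - z2 x) + N * integral {0..L} (\<lambda>x. y x - z x) = 0)"
    using C1 C2 by blast
  have D: "y 0 - z 0 = 0 \<and> y L - z L = 0 \<and> y2 0 - z2 0 = 0 \<and> y2 L - z2 L = 0" using yb zb by simp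
  show ?thesis unfolding is_solution_def
    apply (rule exI[where x="\<lambda>x. y1 x - z1 x"], rule exI[where x="\<lambda>x. y2 x - z2 x"],
        rule exI[where x="\<lambda>x. y3 x - z3 x"], rule exI[where x="\<lambda>t. g t - h t"])
    by (rule conjI[OF A conjI[OF B' conjI[OF C D]]])
qed


context
  fixes M L :: real
  assumes L: "L > 0" and M: "M > 0"
begin

lemma hom_zero:
  assumes N: "\<bar>N\<bar> \<le> 8 * M / L ^ 3" and y: "is_solution M N L (\<lambda>x. 0) y" and x: "x \<in> {0..L}"
  shows "y x = 0"
proof -
  obtain y1 y2 y3 g S where g: "g absolutely_integrable_on {0..L}"
    and yd: "\<forall>x\<in>{0..L}. (y has_real_derivative y1 x) (at x within {0..L}) \<and>
            (y1 has_real_derivative y2 x) (at x within {0..L}) \<and>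
            (y2 has_real_derivative y3 x) (at x within {0..L}) \<and>
            y3 x = y3 0 + integral {0..x} g"
    and S: "negligible S" "\<forall>x\<in>{0<..<L} - S. g x - M * y2 x + N * integral {0..L} y = 0"
    and yb: "y 0 = 0" "y L = 0" "y2 0 = 0" "y2 L = 0"
    using y unfolding is_solution_def by blast
  define c where "c = integral {0..L} y"
  have cy2: "continuous_on {0..L} y2" by (rule deriv_cont_on) (use yd in blast)
  have chh: "continuous_on {0..L} (\<lambda>t. M * y2 t + - N * c)" by (intro continuous_intros cy2)
  have y3eq: "y3 t = y3 0 + integral {0..t} (\<lambda>t. M * y2 t + - N * c)" if t: "t \<in> {0..L}" for t
  proof -
    have "integral {0..t} g = integral {0..t} (\<lambda>t. M * y2 t + - N * c)"
    proof (rule integral_spike[where S="S \<union> {0, L}"])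
      show "negligible (S \<union> {0, L})" using S(1) by (simp add: negligible_Un)
      fix u assume "u \<in> {0..t} - (S \<union> {0, L})"
      then have "u \<in> {0<..<L} - S" using t by auto
      then have "g u - M * y2 u + N * c = 0" using S(2) unfolding c_def by blast
      then show "M * y2 u + - N * c = g u" by simp
    qed
    moreover from yd t have "y3 t = y3 0 + integral {0..t} g" by blast
    ultimately show ?thesis by simp
  qed
  have d3: "(y3 has_real_derivative M * y2 t + - N * c) (at t within {0..L})" if t: "t \<in> {0..L}" for t
  proof (rule has_field_derivative_transform_within[OF _ zero_less_one t])
    have "((\<lambda>u. integral {0..u} (\<lambda>t. M * y2 t + - N * c)) has_real_derivative M * y2 t + - N * c) (at t within {0..L})"
      using integral_has_vector_derivative[OF chh t] by (simp add: has_real_derivative_iff_has_vector_derivative)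
    then show "((\<lambda>u. y3 0 + integral {0..u} (\<lambda>t. M * y2 t + - N * c)) has_real_derivative M * y2 t + - N * c) (at t within {0..L})"
      by (auto intro!: derivative_eq_intros)
    show "y3 0 + integral {0..u} (\<lambda>t. M * y2 t + - N * c) = y3 u" if "u \<in> {0..L}" for u
      using y3eq[OF that] by simp
  qed
  define P where "P = integral {0..L} (\<lambda>x. (y1 x)\<^sup>2)"
  define R where "R = integral {0..L} (\<lambda>x. (y2 x)\<^sup>2)"
  have E: "R + M * P = (- N * c) * c" "12 * c\<^sup>2 \<le> L ^ 3 * P" "0 \<le> P" "0 \<le> R"
  proof -
    have yd1: "\<And>x. x \<in> {0..L} \<Longrightarrow> (y has_real_derivative y1 x) (at x within {0..L})" using yd by blast
    have yd2: "\<And>x. x \<in> {0..L} \<Longrightarrow> (y1 has_real_derivative y2 x) (at x within {0..L})" using yd by blast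
    have yd3: "\<And>x. x \<in> {0..L} \<Longrightarrow> (y2 has_real_derivative y3 x) (at x within {0..L})" using yd by blast
    note en = energy[OF L M yd1 yd2 yd3 d3 yb]
    show "R + M * P = (- N * c) * c" using en(1) unfolding c_def P_def R_def by simp
    show "12 * c\<^sup>2 \<le> L ^ 3 * P" using en(2) unfolding c_def P_def by simp
    show "0 \<le> P" using en(3) unfolding P_def by simp
    show "0 \<le> R" using en(4) unfolding R_def by simp
  qed
  have "- N * (c * c) \<le> \<bar>N\<bar> * (c * c)" by (rule mult_right_mono) auto
  then have "- N * c * c \<le> \<bar>N\<bar> * c\<^sup>2" by (simp add: power2_eq_square mult.assoc)
  also have "\<dots> \<le> 8 * M / L ^ 3 * c\<^sup>2" using N by (intro mult_right_mono) auto
  also have "\<dots> \<le> 8 * M / L ^ 3 * (L ^ 3 * P / 12)"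
    using E(2) M L by (intro mult_left_mono) auto
  also have "\<dots> = 2 / 3 * M * P" using L by (simp add: field_simps)
  finally have "R + M * P \<le> 2 / 3 * M * P" using E(1) by simp
  then have "M * P \<le> 0" using E(4) by simp
  then have P0: "P = 0" using E(3) M by (simp add: mult_le_0_iff)
  have cy1: "continuous_on {0..L} y1" by (rule deriv_cont_on) (use yd in blast)
  have "\<forall>t\<in>cbox 0 L. (y1 t)\<^sup>2 = 0"
  proof (subst integral_cbox_eq_0_iff[symmetric])
    show "continuous_on (cbox 0 L) (\<lambda>t. (y1 t)\<^sup>2)" using cy1 by (simp add: continuous_intros)
    show "box 0 L \<noteq> {}" using L by simp
    show "integral (cbox 0 L) (\<lambda>t. (y1 t)\<^sup>2) = 0" using P0 unfolding P_def by simp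
  qed auto
  then have y10: "y1 t = 0" if "t \<in> {0..L}" for t using that by simp
  have "(y1 has_integral (y x - y 0)) {0..x}"
  proof (rule ftc0)
    show "0 \<le> x" using x by simp
    fix t assume "t \<in> {0..x}"
    show "(y has_real_derivative y1 t) (at t within {0..x})"
    proof (rule has_field_derivative_subset[where s="{0..L}"])
      show "(y has_real_derivative y1 t) (at t within {0..L})" using yd \<open>t \<in> {0..x}\<close> x by auto
    qed (use x in auto)
  qed
  moreover have "(y1 has_integral 0) {0..x}"
  proof (rule has_integral_eq[where f="\<lambda>_. 0"])
    show "((\<lambda>_. 0) has_integral (0::real)) {0..x}" by (rule has_integral_0)
    fix t assume "t \<in> {0..x}"
    then have "t \<in> {0..L}" using x by auto
    then show "0 = y1 t" using y10 by simp
  qed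
  ultimately have "y x - y 0 = 0" by (rule has_integral_unique)
  then show ?thesis using yb by simp
qed

end

lemma y3_deriv:
  fixes y3 h :: "real \<Rightarrow> real"
  assumes ch: "continuous_on {0..L} h" and eq: "\<And>x. x \<in> {0..L} \<Longrightarrow> y3 x = y3 0 + integral {0..x} h"
    and t: "t \<in> {0..L}"
  shows "(y3 has_real_derivative h t) (at t within {0..L})"
proof (rule has_field_derivative_transform_within[OF _ zero_less_one t])
  have "((\<lambda>u. integral {0..u} h) has_real_derivative h t) (at t within {0..L})"
    using integral_has_vector_derivative[OF ch t] by (simp add: has_real_derivative_iff_has_vector_derivative)
  then show "((\<lambda>u. y3 0 + integral {0..u} h) has_real_derivative h t) (at t within {0..L})"
    by (auto intro!: derivative_eq_intros)
  show "y3 0 + integral {0..u} h = y3 u" if "u \<in> {0..L}" for u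
    using eq[OF that] by simp
qed

theorem theorem2p1:
  fixes L M N :: real and p :: "real \<Rightarrow> real"
  assumes "L > 0" and "M > 0" and "\<bar>N\<bar> \<le> 8 * M / L ^ 3"
    and "p absolutely_integrable_on {0..L}"
  shows "(\<exists>y. is_solution M N L p y) \<and>
         (\<forall>y. is_solution M N L p y \<longrightarrow>
            (\<forall>x\<in>{0..L}.
               y x = integral {0..L} (\<lambda>s. green M L x s * p s)
                 - N * integral {0..L} (\<lambda>s. green M L x s)
                   / (1 + N * integral {0..L} (\<lambda>x. integral {0..L} (\<lambda>s. green M L x s)))
                   * integral {0..L} (\<lambda>x. integral {0..L} (\<lambda>s. green M L x s * p s))))"
proof -
  have Lp: "L > 0" and Mp: "M > 0" and Nb: "\<bar>N\<bar> \<le> 8 * M / L ^ 3" and pi: "p absolutely_integrable_on {0..L}"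
    using assms by auto
  have one: "(\<lambda>s. 1::real) absolutely_integrable_on {0..L}"
    by (rule absolutely_integrable_continuous_real) (rule continuous_on_const)
  define Yp where "Yp = (\<lambda>x. integral {0..L} (\<lambda>s. green M L x s * p s))"
  define W where "W = (\<lambda>x. integral {0..L} (\<lambda>s. green M L x s))"
  obtain p1 p2 p3 where Pd: "\<forall>x\<in>{0..L}.
      (Yp has_real_derivative p1 x) (at x within {0..L}) \<and>
      (p1 has_real_derivative p2 x) (at x within {0..L}) \<and>
      (p2 has_real_derivative p3 x) (at x within {0..L}) \<and>
      p3 x = p3 0 + integral {0..x} (\<lambda>t. p t + M * p2 t)"
    and Pb: "Yp 0 = 0" "Yp L = 0" "p2 0 = 0" "p2 L = 0" and Pc: "continuous_on {0..L} p2"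
    using green_sol[OF Lp Mp pi] unfolding Yp_def by blast
  obtain w1 w2 w3 where Wd: "\<forall>x\<in>{0..L}.
      (W has_real_derivative w1 x) (at x within {0..L}) \<and>
      (w1 has_real_derivative w2 x) (at x within {0..L}) \<and>
      (w2 has_real_derivative w3 x) (at x within {0..L}) \<and>
      w3 x = w3 0 + integral {0..x} (\<lambda>t. 1 + M * w2 t)"
    and Wb: "W 0 = 0" "W L = 0" "w2 0 = 0" "w2 L = 0" and Wc: "continuous_on {0..L} w2"
    using green_sol[OF Lp Mp one, unfolded mult_1_right] unfolding W_def by blast
  define I1 where "I1 = integral {0..L} W"
  define Ip where "Ip = integral {0..L} Yp"
  have Wd1: "\<And>x. x \<in> {0..L} \<Longrightarrow> (W has_real_derivative w1 x) (at x within {0..L})" using Wd by blast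
  have Wd2: "\<And>x. x \<in> {0..L} \<Longrightarrow> (w1 has_real_derivative w2 x) (at x within {0..L})" using Wd by blast
  have Wd3: "\<And>x. x \<in> {0..L} \<Longrightarrow> (w2 has_real_derivative w3 x) (at x within {0..L})" using Wd by blast
  have Wd4: "(w3 has_real_derivative M * w2 x + 1) (at x within {0..L})" if "x \<in> {0..L}" for x
  proof -
    have ch: "continuous_on {0..L} (\<lambda>t. 1 + M * w2 t)" by (intro continuous_intros Wc)
    have eq: "\<And>x. x \<in> {0..L} \<Longrightarrow> w3 x = w3 0 + integral {0..x} (\<lambda>t. 1 + M * w2 t)" using Wd by blast
    have "(w3 has_real_derivative 1 + M * w2 x) (at x within {0..L})"
      by (rule y3_deriv[OF ch eq that])
    then show ?thesis by (simp add: add.commute)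
  qed
  note en = energy[OF Lp Mp Wd1 Wd2 Wd3 Wd4 Wb]
  define Pw where "Pw = integral {0..L} (\<lambda>x. (w1 x)\<^sup>2)"
  define Rw where "Rw = integral {0..L} (\<lambda>x. (w2 x)\<^sup>2)"
  have e1: "Rw + M * Pw = I1" using en(1) unfolding Rw_def Pw_def I1_def by simp
  have e2: "12 * I1\<^sup>2 \<le> L ^ 3 * Pw" using en(2) unfolding Pw_def I1_def by simp
  have e3: "0 \<le> Pw" "0 \<le> Rw" using en(3,4) unfolding Pw_def Rw_def by simp_all
  have a: "M * Pw \<le> I1" using e1 e3 by linarith
  have I10: "0 \<le> I1" using a e3 Mp by (smt (verit) mult_nonneg_nonneg)
  have b: "12 * M * I1\<^sup>2 \<le> L ^ 3 * I1"
  proof -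
    have "M * (12 * I1\<^sup>2) \<le> M * (L ^ 3 * Pw)" using e2 Mp by (intro mult_left_mono) auto
    also have "\<dots> = L ^ 3 * (M * Pw)" by simp
    also have "\<dots> \<le> L ^ 3 * I1" using a Lp by (intro mult_left_mono) auto
    finally show ?thesis by (simp add: mult_ac)
  qed
  have c: "12 * M * I1 \<le> L ^ 3"
  proof (cases "I1 = 0")
    case True then show ?thesis using Lp by simp
  next
    case False
    then have "I1 > 0" using I10 by simp
    moreover have "(12 * M * I1) * I1 \<le> L ^ 3 * I1" using b by (simp add: power2_eq_square mult_ac)
    ultimately show ?thesis by simp
  qed
  have "\<bar>N\<bar> * I1 \<le> 8 * M / L ^ 3 * I1" using Nb I10 by (intro mult_right_mono)
  also have "\<dots> \<le> 2 / 3" using c Lp by (simp add: field_simps)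
  finally have "\<bar>N\<bar> * I1 \<le> 2 / 3" .
  moreover have "- (N * I1) \<le> \<bar>N\<bar> * I1" using I10 by (metis abs_ge_minus_self abs_mult abs_of_nonneg)
  ultimately have D: "1 + N * I1 > 0" by linarith
  define K where "K = N * Ip / (1 + N * I1)"
  define Y where "Y = (\<lambda>x. Yp x - K * W x)"
  have cYp: "continuous_on {0..L} Yp" by (rule deriv_cont_on) (use Pd in blast)
  have cW: "continuous_on {0..L} W" by (rule deriv_cont_on) (use Wd in blast)
  have intY: "integral {0..L} Y = Ip - K * I1"
    unfolding Y_def Ip_def I1_def
    using integrable_continuous_real[OF cYp] integrable_continuous_real[OF continuous_on_mult_left[OF cW, of K]]
    by (simp add: integral_diff)
  have NK: "N * (Ip - K * I1) = K"
    using D unfolding K_def by (simp add: field_simps)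
  have Ysol: "is_solution M N L p Y"
  proof -
    define g where "g = (\<lambda>t. (p t + M * p2 t) - K * (1 + M * w2 t))"
    have cg1: "continuous_on {0..L} (\<lambda>t. M * p2 t)" by (intro continuous_intros Pc)
    have cg2: "continuous_on {0..L} (\<lambda>t. K * (1 + M * w2 t))" by (intro continuous_intros Wc)
    have gp: "(\<lambda>t. p t + M * p2 t) absolutely_integrable_on {0..L}"
      using pi absolutely_integrable_continuous_real[OF cg1] by (rule set_integral_add(1))
    have gi: "g absolutely_integrable_on {0..L}" unfolding g_def
      using gp absolutely_integrable_continuous_real[OF cg2] by (rule set_integral_diff(1))
    have B: "\<forall>x\<in>{0..L}. (Y has_real_derivative p1 x - K * w1 x) (at x within {0..L}) \<and>
      ((\<lambda>x. p1 x - K * w1 x) has_real_derivative p2 x - K * w2 x) (at x within {0..L}) \<and>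
      ((\<lambda>x. p2 x - K * w2 x) has_real_derivative p3 x - K * w3 x) (at x within {0..L}) \<and>
      p3 x - K * w3 x = (p3 0 - K * w3 0) + integral {0..x} g"
    proof
      fix x assume x: "x \<in> {0..L}"
      from Pd x have px: "(Yp has_real_derivative p1 x) (at x within {0..L})"
          "(p1 has_real_derivative p2 x) (at x within {0..L})"
          "(p2 has_real_derivative p3 x) (at x within {0..L})"
          "p3 x = p3 0 + integral {0..x} (\<lambda>t. p t + M * p2 t)" by blast+
      from Wd x have wx: "(W has_real_derivative w1 x) (at x within {0..L})"
          "(w1 has_real_derivative w2 x) (at x within {0..L})"
          "(w2 has_real_derivative w3 x) (at x within {0..L})"
          "w3 x = w3 0 + integral {0..x} (\<lambda>t. 1 + M * w2 t)" by blast+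
      have i1: "(\<lambda>t. p t + M * p2 t) integrable_on {0..x}" using absint_sub(1)[OF gp, of 0 x] x by auto
      have i2: "(\<lambda>t. K * (1 + M * w2 t)) integrable_on {0..x}"
        using absint_sub(1)[OF absolutely_integrable_continuous_real[OF cg2], of 0 x] x by auto
      have "integral {0..x} g = integral {0..x} (\<lambda>t. p t + M * p2 t) - integral {0..x} (\<lambda>t. K * (1 + M * w2 t))"
        unfolding g_def using i1 i2 by (rule integral_diff)
      also have "integral {0..x} (\<lambda>t. K * (1 + M * w2 t)) = K * integral {0..x} (\<lambda>t. 1 + M * w2 t)"
        by (rule Henstock_Kurzweil_Integration.integral_mult_right)
      finally have ig: "integral {0..x} g = integral {0..x} (\<lambda>t. p t + M * p2 t) - K * integral {0..x} (\<lambda>t. 1 + M * w2 t)" .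
      show "(Y has_real_derivative p1 x - K * w1 x) (at x within {0..L}) \<and>
        ((\<lambda>x. p1 x - K * w1 x) has_real_derivative p2 x - K * w2 x) (at x within {0..L}) \<and>
        ((\<lambda>x. p2 x - K * w2 x) has_real_derivative p3 x - K * w3 x) (at x within {0..L}) \<and>
        p3 x - K * w3 x = (p3 0 - K * w3 0) + integral {0..x} g"
      proof (intro conjI)
        show "(Y has_real_derivative p1 x - K * w1 x) (at x within {0..L})"
          unfolding Y_def by (rule DERIV_diff[OF px(1) DERIV_cmult[OF wx(1)]])
        show "((\<lambda>x. p1 x - K * w1 x) has_real_derivative p2 x - K * w2 x) (at x within {0..L})"
          by (rule DERIV_diff[OF px(2) DERIV_cmult[OF wx(2)]])
        show "((\<lambda>x. p2 x - K * w2 x) has_real_derivative p3 x - K * w3 x) (at x within {0..L})"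
          by (rule DERIV_diff[OF px(3) DERIV_cmult[OF wx(3)]])
        show "p3 x - K * w3 x = (p3 0 - K * w3 0) + integral {0..x} g"
          unfolding ig px(4) wx(4) by (simp add: algebra_simps)
      qed
    qed
    have C: "\<forall>x\<in>{0<..<L} - {}. g x - M * (p2 x - K * w2 x) + N * integral {0..L} Y = p x"
    proof
      fix x
      have "g x - M * (p2 x - K * w2 x) = p x - K" unfolding g_def by (simp add: algebra_simps)
      then show "g x - M * (p2 x - K * w2 x) + N * integral {0..L} Y = p x" unfolding intY NK by simp
    qed
    have C': "\<exists>S. negligible S \<and> (\<forall>x\<in>{0<..<L} - S. g x - M * (p2 x - K * w2 x) + N * integral {0..L} Y = p x)"
      using C negligible_empty by blast
    have E: "Y 0 = 0 \<and> Y L = 0 \<and> p2 0 - K * w2 0 = 0 \<and> p2 L - K * w2 L = 0"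
      unfolding Y_def using Pb Wb by simp
    show ?thesis unfolding is_solution_def
      apply (rule exI[where x="\<lambda>x. p1 x - K * w1 x"], rule exI[where x="\<lambda>x. p2 x - K * w2 x"],
          rule exI[where x="\<lambda>x. p3 x - K * w3 x"], rule exI[where x="g"])
      by (rule conjI[OF gi conjI[OF B conjI[OF C' E]]])
  qed
  have uniq: "y x = Y x" if y: "is_solution M N L p y" and x: "x \<in> {0..L}" for y x
  proof -
    have "is_solution M N L (\<lambda>x. 0) (\<lambda>x. y x - Y x)" by (rule sol_diff[OF Lp y Ysol])
    then have "y x - Y x = 0" using hom_zero[OF Lp Mp Nb _ x] by blast
    then show ?thesis by simp
  qed
  have form: "Y x = Yp x - N * W x / (1 + N * I1) * Ip" for x
    unfolding Y_def K_def by (simp add: field_simps)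
  show ?thesis
  proof (intro conjI allI impI ballI)
    show "\<exists>y. is_solution M N L p y" using Ysol by blast
    fix y x assume "is_solution M N L p y" "x \<in> {0..L}"
    then have "y x = Yp x - N * W x / (1 + N * I1) * Ip" using uniq form by simp
    then show "y x = integral {0..L} (\<lambda>s. green M L x s * p s)
                 - N * integral {0..L} (\<lambda>s. green M L x s)
                   / (1 + N * integral {0..L} (\<lambda>x. integral {0..L} (\<lambda>s. green M L x s)))
                   * integral {0..L} (\<lambda>x. integral {0..L} (\<lambda>s. green M L x s * p s))"
      unfolding Yp_def W_def I1_def Ip_def .
  qed
qed


end
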